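(* Let $(X,\{R_i\}_{i=0}^d)$ be a symmetric association scheme with adjacency matrices $A_0=I,\dots,A_d$ and intersection numbers $p_{ij}^k$, and let $W=\sum_{i=0}^dw_iA_i$ with $w_0=1$ be a complex Hadamard matrix. Let $\Delta\subseteq\{1,\dots,d\}$, and suppose there exists $i\in\{1,\dots,d\}$ such that $p_{i_1,j_1}^i>0$ for all $i_1,j_1\in\Delta$. Then \[ H_4(W)\supseteq\left\{\frac{w_{i_1}w_{i_2}}{w_{j_1}w_{j_2}}\;\middle|\;i_1,i_2,j_1,j_2\in\Delta\right\}\setminus\{1\}. \] In particular, if there exists $i\in\{1,\dots,d\}$ such that $p_{i_1,j_1}^i>0$ for all $i_1,j_1\in\{1,\dots,d\}$, then \[ H_4(W)\setminus\{1\}=\left\{\frac{w_{i_1}w_{i_2}}{w_{j_1}w_{j_2}}\;\middle|\;i_1,i_2,j_1,j_2\in\{1,\dots,d\}\right\}\setminus\{1\}. \]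
   Context: An association scheme $(X,\{R_i\}_{i=0}^d)$ is a partition of $X\times X$ into relations $R_0=\{(x,x)\}$, $R_1,\dots,R_d$ such that for $(x,y)\in R_k$ the number $p_{ij}^k=|\{z\in X:(x,z)\in R_i,(z,y)\in R_j\}|$ depends only on $i,j,k$; symmetric means each $R_i$ is symmetric. $A_i$ is the $(0,1)$-matrix of $R_i$. A complex Hadamard matrix is a square complex matrix $H$ of order $n=|X|$ with entries of absolute value $1$ and $HH^*=nI$. For $W$ indexed by $X$, \[ H_4(W)=\left\{\frac{W_{x_1,y_1}W_{x_2,y_2}}{W_{x_2,y_1}W_{x_1,y_2}}\;\middle|\;x_1,x_2,y_1,y_2\in X,\ |\{x_1,x_2,y_1,y_2\}|=4\right\}. \] *)

theory Defs
  imports Complex_Main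
begin

definition sym_assoc_scheme ::
  "'a set \<Rightarrow> nat \<Rightarrow> (nat \<Rightarrow> ('a \<times> 'a) set) \<Rightarrow> (nat \<Rightarrow> nat \<Rightarrow> nat \<Rightarrow> nat) \<Rightarrow> bool" where
  "sym_assoc_scheme X d R p \<longleftrightarrow>
     finite X \<and> X \<noteq> {} \<and>
     R 0 = Id_on X \<and>
     (\<forall>i\<le>d. R i \<subseteq> X \<times> X \<and> R i \<noteq> {}) \<and>
     (\<forall>i\<le>d. \<forall>j\<le>d. i \<noteq> j \<longrightarrow> R i \<inter> R j = {}) \<and>
     (\<Union>i\<le>d. R i) = X \<times> X \<and>
     (\<forall>i\<le>d. (R i)\<inverse> = R i) \<and>
     (\<forall>i\<le>d. \<forall>j\<le>d. \<forall>k\<le>d. \<forall>x y. (x, y) \<in> R k \<longrightarrow>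
        card {z \<in> X. (x, z) \<in> R i \<and> (z, y) \<in> R j} = p i j k)"

definition complex_hadamard :: "'a set \<Rightarrow> ('a \<Rightarrow> 'a \<Rightarrow> complex) \<Rightarrow> bool" where
  "complex_hadamard X W \<longleftrightarrow>
     (\<forall>x\<in>X. \<forall>y\<in>X. cmod (W x y) = 1) \<and>
     (\<forall>x\<in>X. \<forall>y\<in>X. (\<Sum>z\<in>X. W x z * cnj (W y z)) = (if x = y then of_nat (card X) else 0))"

definition H4 :: "'a set \<Rightarrow> ('a \<Rightarrow> 'a \<Rightarrow> complex) \<Rightarrow> complex set" where
  "H4 X W = {W x1 y1 * W x2 y2 / (W x2 y1 * W x1 y2) | x1 x2 y1 y2.
     x1 \<in> X \<and> x2 \<in> X \<and> y1 \<in> X \<and> y2 \<in> X \<and> card {x1, x2, y1, y2} = 4}"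

end

theory Submission
  imports Defs
begin

lemma sas_facts:
  assumes "sym_assoc_scheme X d R p"
  shows "R 0 = Id_on X" "\<And>i. i\<le>d \<Longrightarrow> R i \<subseteq> X \<times> X" "\<And>i. i\<le>d \<Longrightarrow> R i \<noteq> {}"
    "\<And>i j. i\<le>d \<Longrightarrow> j\<le>d \<Longrightarrow> i\<noteq>j \<Longrightarrow> R i \<inter> R j = {}"
    "(\<Union>i\<le>d. R i) = X \<times> X" "\<And>i. i\<le>d \<Longrightarrow> (R i)\<inverse> = R i"
    "\<And>i j k x y. i\<le>d \<Longrightarrow> j\<le>d \<Longrightarrow> k\<le>d \<Longrightarrow> (x, y) \<in> R k \<Longrightarrow>
        card {z \<in> X. (x, z) \<in> R i \<and> (z, y) \<in> R j} = p i j k"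
  using assms unfolding sym_assoc_scheme_def by simp_all

lemma pair_in:
  assumes "sym_assoc_scheme X d R p" "x\<in>X" "y\<in>X" "x\<noteq>y"
  shows "\<exists>k\<in>{1..d}. (x,y)\<in>R k"
proof -
  from sas_facts(5)[OF assms(1)] assms(2,3) obtain k where k: "k\<le>d" "(x,y)\<in>R k" by blast
  have "k \<noteq> 0"
  proof
    assume "k = 0" thus False using k sas_facts(1)[OF assms(1)] assms(4) by (auto simp: Id_on_def)
  qed
  thus ?thesis using k by auto
qed

lemma not_diag:
  assumes "sym_assoc_scheme X d R p" "k\<in>{1..d}" "(x,y)\<in>R k"
  shows "x \<noteq> y"
proof
  assume "x = y"
  have "x \<in> X" using sas_facts(2)[OF assms(1)] assms by auto
  hence "(x,y) \<in> R 0" using \<open>x = y\<close> sas_facts(1)[OF assms(1)] by auto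
  thus False using sas_facts(4)[OF assms(1), of 0 k] assms by auto
qed

lemma mid:
  assumes "sym_assoc_scheme X d R p" "i\<le>d" "a\<le>d" "b\<le>d" "(x,y)\<in>R i" "p a b i > 0"
  shows "\<exists>z\<in>X. (x,z)\<in>R a \<and> (z,y)\<in>R b"
proof -
  have "card {z \<in> X. (x, z) \<in> R a \<and> (z, y) \<in> R b} > 0"
    using sas_facts(7)[OF assms(1) assms(3,4,2,5)] assms(6) by simp
  hence "{z \<in> X. (x, z) \<in> R a \<and> (z, y) \<in> R b} \<noteq> {}" by (metis card.empty less_irrefl)
  thus ?thesis by blast
qed

lemma part1:
  assumes scheme: "sym_assoc_scheme X d R p"
    and W_def: "\<forall>i\<le>d. \<forall>x y. (x, y) \<in> R i \<longrightarrow> W x y = w i"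
    and hadamard: "complex_hadamard X W"
    and D: "\<Delta> \<subseteq> {1..d}" and i: "i\<in>{1..d}" and P: "\<forall>i1\<in>\<Delta>. \<forall>j1\<in>\<Delta>. p i1 j1 i > 0"
    and mem: "i1 \<in> \<Delta>" "i2 \<in> \<Delta>" "j1 \<in> \<Delta>" "j2 \<in> \<Delta>"
    and ne: "w i1 * w i2 / (w j1 * w j2) \<noteq> 1"
  shows "w i1 * w i2 / (w j1 * w j2) \<in> H4 X W"
proof -
  have id: "i \<le> d" using i by auto
  obtain x y where xy: "(x,y) \<in> R i" using sas_facts(3)[OF scheme id] by auto
  have xX: "x\<in>X" "y\<in>X" using xy sas_facts(2)[OF scheme id] by auto
  have xney: "x \<noteq> y" using not_diag[OF scheme i xy] .
  have md: "i1 \<in> {1..d}" "i2 \<in> {1..d}" "j1 \<in> {1..d}" "j2 \<in> {1..d}" using mem D by auto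
  obtain y1 where y1: "y1\<in>X" "(x,y1)\<in>R i1" "(y1,y)\<in>R j1"
    using mid[OF scheme id _ _ xy, of i1 j1] md P mem by auto
  obtain y2 where y2: "y2\<in>X" "(x,y2)\<in>R j2" "(y2,y)\<in>R i2"
    using mid[OF scheme id _ _ xy, of j2 i2] md P mem by auto
  have y1s: "(y,y1)\<in>R j1" using y1(3) sas_facts(6)[OF scheme, of j1] md by auto
  have y2s: "(y,y2)\<in>R i2" using y2(3) sas_facts(6)[OF scheme, of i2] md by auto
  have W1: "W x y1 = w i1" "W y y1 = w j1" "W x y2 = w j2" "W y y2 = w i2"
    using W_def y1 y2 y1s y2s md by auto
  have n1: "x \<noteq> y1" using not_diag[OF scheme md(1) y1(2)] .
  have n2: "y \<noteq> y1" using not_diag[OF scheme md(3) y1s] .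
  have n3: "x \<noteq> y2" using not_diag[OF scheme md(4) y2(2)] .
  have n4: "y \<noteq> y2" using not_diag[OF scheme md(2) y2s] .
  have nz: "W x y1 \<noteq> 0" "W y y1 \<noteq> 0"
    using hadamard xX y1 unfolding complex_hadamard_def by (metis norm_zero zero_neq_one)+
  have n5: "y1 \<noteq> y2"
  proof
    assume "y1 = y2"
    hence "w i1 * w i2 / (w j1 * w j2) = W x y1 * W y y1 / (W y y1 * W x y1)"
      using W1 by simp
    also have "\<dots> = 1" using nz by simp
    finally show False using ne by simp
  qed
  have c: "card {x, y, y1, y2} = 4" using xney n1 n2 n3 n4 n5 distinct_card[of "[x, y, y1, y2]"] by simp
  have "w i1 * w i2 / (w j1 * w j2) = W x y1 * W y y2 / (W y y1 * W x y2)" using W1 by simp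
  thus ?thesis unfolding H4_def using c xX y1(1) y2(1) by blast
qed

theorem lemma5p2:
  fixes X :: "'a set" and d :: nat and R :: "nat \<Rightarrow> ('a \<times> 'a) set"
    and p :: "nat \<Rightarrow> nat \<Rightarrow> nat \<Rightarrow> nat"
    and w :: "nat \<Rightarrow> complex" and W :: "'a \<Rightarrow> 'a \<Rightarrow> complex"
  assumes scheme: "sym_assoc_scheme X d R p"
    and W_def: "\<forall>i\<le>d. \<forall>x y. (x, y) \<in> R i \<longrightarrow> W x y = w i"
    and w0: "w 0 = 1"
    and hadamard: "complex_hadamard X W"
  shows "(\<forall>\<Delta> \<subseteq> {1..d}. (\<exists>i\<in>{1..d}. \<forall>i1\<in>\<Delta>. \<forall>j1\<in>\<Delta>. p i1 j1 i > 0) \<longrightarrow>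
            {w i1 * w i2 / (w j1 * w j2) | i1 i2 j1 j2.
               i1 \<in> \<Delta> \<and> i2 \<in> \<Delta> \<and> j1 \<in> \<Delta> \<and> j2 \<in> \<Delta>} - {1} \<subseteq> H4 X W)
       \<and> ((\<exists>i\<in>{1..d}. \<forall>i1\<in>{1..d}. \<forall>j1\<in>{1..d}. p i1 j1 i > 0) \<longrightarrow>
            H4 X W - {1} = {w i1 * w i2 / (w j1 * w j2) | i1 i2 j1 j2.
               i1 \<in> {1..d} \<and> i2 \<in> {1..d} \<and> j1 \<in> {1..d} \<and> j2 \<in> {1..d}} - {1})"
proof (intro conjI allI impI)
  fix \<Delta> assume D: "\<Delta> \<subseteq> {1..d}" and "\<exists>i\<in>{1..d}. \<forall>i1\<in>\<Delta>. \<forall>j1\<in>\<Delta>. p i1 j1 i > 0"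
  then obtain i where i: "i\<in>{1..d}" "\<forall>i1\<in>\<Delta>. \<forall>j1\<in>\<Delta>. p i1 j1 i > 0" by blast
  show "{w i1 * w i2 / (w j1 * w j2) | i1 i2 j1 j2.
               i1 \<in> \<Delta> \<and> i2 \<in> \<Delta> \<and> j1 \<in> \<Delta> \<and> j2 \<in> \<Delta>} - {1} \<subseteq> H4 X W"
    using part1[OF scheme W_def hadamard D i] by blast
next
  assume "\<exists>i\<in>{1..d}. \<forall>i1\<in>{1..d}. \<forall>j1\<in>{1..d}. p i1 j1 i > 0"
  then obtain i where i: "i\<in>{1..d}" "\<forall>i1\<in>{1..d}. \<forall>j1\<in>{1..d}. p i1 j1 i > 0" by blast
  show "H4 X W - {1} = {w i1 * w i2 / (w j1 * w j2) | i1 i2 j1 j2.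
               i1 \<in> {1..d} \<and> i2 \<in> {1..d} \<and> j1 \<in> {1..d} \<and> j2 \<in> {1..d}} - {1}"
  proof
    show "{w i1 * w i2 / (w j1 * w j2) | i1 i2 j1 j2.
               i1 \<in> {1..d} \<and> i2 \<in> {1..d} \<and> j1 \<in> {1..d} \<and> j2 \<in> {1..d}} - {1} \<subseteq> H4 X W - {1}"
      using part1[OF scheme W_def hadamard order_refl i] by blast
  next
    show "H4 X W - {1} \<subseteq> {w i1 * w i2 / (w j1 * w j2) | i1 i2 j1 j2.
               i1 \<in> {1..d} \<and> i2 \<in> {1..d} \<and> j1 \<in> {1..d} \<and> j2 \<in> {1..d}} - {1}"
    proof
      fix v assume "v \<in> H4 X W - {1}"
      then obtain x1 x2 y1 y2 where v: "v = W x1 y1 * W x2 y2 / (W x2 y1 * W x1 y2)"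
        and m: "x1 \<in> X" "x2 \<in> X" "y1 \<in> X" "y2 \<in> X" and c: "card {x1, x2, y1, y2} = 4"
        and v1: "v \<noteq> 1"
        unfolding H4_def by blast
      have dist: "x1 \<noteq> y1" "x2 \<noteq> y2" "x2 \<noteq> y1" "x1 \<noteq> y2"
        using c card_distinct[of "[x1, x2, y1, y2]"] by auto
      obtain a where a: "a\<in>{1..d}" "(x1,y1)\<in>R a" using pair_in[OF scheme m(1,3) dist(1)] by blast
      obtain b where b: "b\<in>{1..d}" "(x2,y2)\<in>R b" using pair_in[OF scheme m(2,4) dist(2)] by blast
      obtain e where e: "e\<in>{1..d}" "(x2,y1)\<in>R e" using pair_in[OF scheme m(2,3) dist(3)] by blast
      obtain f where f: "f\<in>{1..d}" "(x1,y2)\<in>R f" using pair_in[OF scheme m(1,4) dist(4)] by blast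
      have "v = w a * w b / (w e * w f)" using v W_def a b e f by auto
      thus "v \<in> {w i1 * w i2 / (w j1 * w j2) | i1 i2 j1 j2.
               i1 \<in> {1..d} \<and> i2 \<in> {1..d} \<and> j1 \<in> {1..d} \<and> j2 \<in> {1..d}} - {1}"
        using a b e f v1 by blast
    qed
  qed
qed

end
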